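(* Under the uniform quantile margin assumption with parameter $\kappa$, and with $c$ satisfying $c\ge \max\{2,\sqrt{2\log(SATH(2^S-2)/\delta)}\}/\sqrt{\log(2SATH/\delta)}$, consider \textsc{UCB--QRL}. With probability at least $1-\delta$, simultaneously for every episode $t\in\{0,\dots,T-1\}$ and every state $s$, $$V^{\pi^\star,P^\star}_{\tau,0}(s)\ \le\ V^{\pi^t,P^t}_{\tau,0}(s).$$
   Context: Finite-horizon tabular MDP: state space $\mathcal S=\{s_1,\dots,s_S\}$, action space $\mathcal A$ with $|\mathcal A|=A$, horizon $H$, steps $h\in\{0,\dots,H-1\}$, deterministic rewards $r_h(s,a)\in[0,1]$, unknown true kernel $P^\star$. A kernel is $P=(P_h(\cdot\mid s,a))$ with each $P_h(\cdot\mid s,a)\in\Delta^S$. Deterministic Markov policy: $\pi=(\pi_h)$, $\pi_h:\mathcal S\to\mathcal A$. For $q\in(0,1]$, $Q_q(X)=\inf\{x:\mathbb P(X\le x)\ge q\}$. Quantile value: $V^{\pi,P}_{q,h}(s)=\inf\{x:\mathbb P(\sum_{k=h}^{H-1}r_k(S_k,A_k)\le x\mid S_h=s)\ge q\}$ with $A_k=\pi_k(S_k)$, $S_{k+1}\sim P_k(\cdot\mid S_k,A_k)$; $V^{\pi,P}_{q,H}\equiv0$. Continuation-mixture: $Z_{s,a,h}(p;V^{\pi,P}_{\cdot,h+1})$ is a random variable with CDF $x\mapsto\sum_i p_i\phi_i(x)$, $\phi_i(x)=\sup\{q\in[0,1]:V^{\pi,P}_{q,h+1}(s_i)\le x\}$.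 Uniform quantile margin assumption: there is $\kappa\in(0,1]$ such that for every $(h,s,a)$, deterministic Markov $\pi$ and $q\in(0,1]$, the CDF of $Z=Z_{s,a,h}(P^\star_h(\cdot\mid s,a);V^{\pi,P^\star}_{\cdot,h+1})$ has a jump of size at least $\kappa$ at $Q_q(Z)$. $\mathcal C_\kappa$ is the set of kernels $P$ satisfying the same jump condition with $P$ in place of $P^\star$ (both in $P_h(\cdot\mid s,a)$ and in $V^{\pi,P}$). \textsc{UCB--QRL}: each episode $t$ starts at a fixed $\bar s$ and runs $\pi^t$ in the true MDP. $N^t_h(s,a)$, $N^t_h(s,a,s')$ are visit/transition counts from episodes $0,\dots,t-1$; $\widehat P^t_h(s'\mid s,a)=N^t_h(s,a,s')/\max\{1,N^t_h(s,a)\}$; $f_\delta(n)=c\sqrt{\log(2SATH/\delta)/\max\{1,n\}}$; $\mathcal C^t_\delta=\{P:\|P_h(\cdot\mid s,a)-\widehat P^t_h(\cdot\mid s,a)\|_1\le f_\delta(N^t_h(s,a))\ \forall s,a,h\}$; $\bar{\mathcal C}^t_{\delta,\kappa}=\mathcal C^t_\delta\cap\mathcal C_\kappa$; $(\pi^t,P^t)$ jointly maximizes $V^{\pi,P}_{\tau,0}$ over deterministic Markov $\pi$ and $P\in\bar{\mathcal C}^t_{\delta,\kappa}$ (for each $t$, including $t=0$). $\pi^\star$ is an optimal policy for $\max_\pi V^{\pi,P^\star}_{\tau,0}$, $\tau\in(0,1)$ fixed. *)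

theory Defs
  imports "HOL-Probability.Probability"
begin

text \<open>A kernel is  P :: nat => 's => 'a => 's pmf  (P h s a = P_h(.|s,a)),
  a deterministic Markov policy is  pol :: nat => 's => 'a,
  rewards  r :: nat => 's => 'a => real.\<close>

type_synonym ('s,'a) kernel = "nat \<Rightarrow> 's \<Rightarrow> 'a \<Rightarrow> 's pmf"
type_synonym ('s,'a) policy = "nat \<Rightarrow> 's \<Rightarrow> 'a"

text \<open>Distribution of the cumulative reward over k steps, starting at step h in state s,
  following pol under kernel P: sum_{j=h}^{h+k-1} r_j(S_j,A_j).\<close>
primrec ret_dist :: "('s,'a) kernel \<Rightarrow> (nat \<Rightarrow> 's \<Rightarrow> 'a \<Rightarrow> real) \<Rightarrow> ('s,'a) policy
                      \<Rightarrow> nat \<Rightarrow> nat \<Rightarrow> 's \<Rightarrow> real pmf" where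
  "ret_dist P r pol 0 h s = return_pmf 0"
| "ret_dist P r pol (Suc k) h s =
     bind_pmf (P h s (pol h s))
       (\<lambda>s'. map_pmf (\<lambda>x. r h s (pol h s) + x) (ret_dist P r pol k (Suc h) s'))"

definition cdf_quantile :: "(real \<Rightarrow> real) \<Rightarrow> real \<Rightarrow> real" where
  "cdf_quantile F q = Inf {x. F x \<ge> q}"

definition cdf_pmf :: "real pmf \<Rightarrow> real \<Rightarrow> real" where
  "cdf_pmf M x = measure_pmf.prob M {..x}"

text \<open>Quantile value V^{pol,P}_{q,h}(s) (for 0 < q <= 1 and h <= H); V_{q,H} = 0.\<close>
definition Vq :: "('s,'a) kernel \<Rightarrow> (nat \<Rightarrow> 's \<Rightarrow> 'a \<Rightarrow> real) \<Rightarrow> nat \<Rightarrow> ('s,'a) policy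
                   \<Rightarrow> real \<Rightarrow> nat \<Rightarrow> 's \<Rightarrow> real" where
  "Vq P r H pol q h s = cdf_quantile (cdf_pmf (ret_dist P r pol (H - h) h s)) q"

text \<open>phi_i(x) = sup {q in [0,1]. V_{q,h}(s_i) <= x}, with the convention V_0 = -infinity
  (so q = 0 always belongs to the set).\<close>
definition phi :: "('s,'a) kernel \<Rightarrow> (nat \<Rightarrow> 's \<Rightarrow> 'a \<Rightarrow> real) \<Rightarrow> nat \<Rightarrow> ('s,'a) policy
                    \<Rightarrow> nat \<Rightarrow> 's \<Rightarrow> real \<Rightarrow> real" where
  "phi P r H pol h i x = Sup ({0} \<union> {q. 0 < q \<and> q \<le> 1 \<and> Vq P r H pol q h i \<le> x})"

text \<open>CDF of the continuation mixture Z_{s,a,h}(p; V_{.,h+1}):  x |-> sum_i p_i phi_i(x).\<close>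
definition mix_cdf :: "('s::finite) pmf \<Rightarrow> ('s \<Rightarrow> real \<Rightarrow> real) \<Rightarrow> real \<Rightarrow> real" where
  "mix_cdf p ph x = (\<Sum>i\<in>UNIV. pmf p i * ph i x)"

definition jump :: "(real \<Rightarrow> real) \<Rightarrow> real \<Rightarrow> real" where
  "jump F y = F y - Sup (F ` {..<y})"

definition quantile_margin :: "('s::finite,'a) kernel \<Rightarrow> (nat \<Rightarrow> 's \<Rightarrow> 'a \<Rightarrow> real) \<Rightarrow> nat
                                \<Rightarrow> real \<Rightarrow> bool" where
  "quantile_margin P r H \<kappa> \<longleftrightarrow>
     (\<forall>h<H. \<forall>s a. \<forall>pol::('s,'a) policy. \<forall>q. 0 < q \<and> q \<le> 1 \<longrightarrow>
        (let F = mix_cdf (P h s a) (phi P r H pol (Suc h))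
         in jump F (cdf_quantile F q) \<ge> \<kappa>))"

text \<open>An episode is the list of transitions (S_h, A_h, S_{h+1}), h = 0..H-1.
  Trajectory distribution of k steps from step h in state s.\<close>
type_synonym ('s,'a) episode = "('s \<times> 'a \<times> 's) list"

primrec traj :: "('s,'a) kernel \<Rightarrow> ('s,'a) policy \<Rightarrow> nat \<Rightarrow> nat \<Rightarrow> 's \<Rightarrow> ('s,'a) episode pmf" where
  "traj P pol 0 h s = return_pmf []"
| "traj P pol (Suc k) h s =
     bind_pmf (P h s (pol h s))
       (\<lambda>s'. map_pmf (\<lambda>rest. (s, pol h s, s') # rest) (traj P pol k (Suc h) s'))"

definition Ncount :: "('s,'a) episode list \<Rightarrow> nat \<Rightarrow> 's \<Rightarrow> 'a \<Rightarrow> nat" where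
  "Ncount hs h s a = length (filter (\<lambda>e. fst (e ! h) = s \<and> fst (snd (e ! h)) = a) hs)"

definition Ncount3 :: "('s,'a) episode list \<Rightarrow> nat \<Rightarrow> 's \<Rightarrow> 'a \<Rightarrow> 's \<Rightarrow> nat" where
  "Ncount3 hs h s a s' = length (filter (\<lambda>e. e ! h = (s, a, s')) hs)"

definition Phat :: "('s,'a) episode list \<Rightarrow> nat \<Rightarrow> 's \<Rightarrow> 'a \<Rightarrow> 's \<Rightarrow> real" where
  "Phat hs h s a s' = real (Ncount3 hs h s a s') / real (max 1 (Ncount hs h s a))"

definition conf_rad :: "nat \<Rightarrow> nat \<Rightarrow> nat \<Rightarrow> nat \<Rightarrow> real \<Rightarrow> real \<Rightarrow> nat \<Rightarrow> real" where
  "conf_rad S A T H c \<delta> n = c * sqrt (ln (2 * real S * real A * real T * real H / \<delta>) / real (max 1 n))"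

definition conf_set :: "nat \<Rightarrow> nat \<Rightarrow> real \<Rightarrow> real \<Rightarrow> ('s::finite,'a::finite) episode list
                         \<Rightarrow> ('s,'a) kernel set" where
  "conf_set T H c \<delta> hs = {P. \<forall>h<H. \<forall>s a.
      (\<Sum>s'\<in>UNIV. \<bar>pmf (P h s a) s' - Phat hs h s a s'\<bar>)
        \<le> conf_rad CARD('s) CARD('a) T H c \<delta> (Ncount hs h s a)}"

definition conf_set_kappa :: "(nat \<Rightarrow> 's \<Rightarrow> 'a \<Rightarrow> real) \<Rightarrow> nat \<Rightarrow> nat \<Rightarrow> real \<Rightarrow> real \<Rightarrow> real
                               \<Rightarrow> ('s::finite,'a::finite) episode list \<Rightarrow> ('s,'a) kernel set" where
  "conf_set_kappa r T H c \<delta> \<kappa> hs = conf_set T H c \<delta> hs \<inter> {P. quantile_margin P r H \<kappa>}"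

primrec run :: "('s,'a) kernel \<Rightarrow> (('s,'a) episode list \<Rightarrow> ('s,'a) policy \<times> ('s,'a) kernel)
                 \<Rightarrow> nat \<Rightarrow> 's \<Rightarrow> nat \<Rightarrow> ('s,'a) episode list pmf" where
  "run Pstar alg H sbar 0 = return_pmf []"
| "run Pstar alg H sbar (Suc t) =
     bind_pmf (run Pstar alg H sbar t)
       (\<lambda>hs. map_pmf (\<lambda>e. hs @ [e]) (traj Pstar (fst (alg hs)) H 0 sbar))"

end

theory Submission
  imports Defs
begin

fun recv :: "nat \<Rightarrow> 's \<Rightarrow> 'a \<Rightarrow> nat \<Rightarrow> ('s \<times> 'a \<times> 's) list \<Rightarrow> 's list" where
  "recv hk sk ak h [] = []"
| "recv hk sk ak h ((s,a,s')#rest) =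
     (if h = hk \<and> s = sk \<and> a = ak then [s'] else []) @ recv hk sk ak (Suc h) rest"

definition Lall :: "nat \<Rightarrow> 's \<Rightarrow> 'a \<Rightarrow> ('s \<times> 'a \<times> 's) list list \<Rightarrow> 's list" where
  "Lall hk sk ak hs = concat (map (recv hk sk ak 0) hs)"

definition Wf :: "'s pmf \<Rightarrow> nat \<Rightarrow> 's list set \<Rightarrow> 's list \<Rightarrow> ennreal" where
  "Wf \<mu> n B l = emeasure (measure_pmf (replicate_pmf (n - length l) \<mu>)) {xs. take n (l @ xs) \<in> B}"

lemma Wf_ge: "n \<le> length l \<Longrightarrow> Wf \<mu> n B l = indicator {l. take n l \<in> B} l"
  by (simp add: Wf_def indicator_def)

lemma Wf_ge_app: "n \<le> length l \<Longrightarrow> Wf \<mu> n B (l @ ys) = Wf \<mu> n B l"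
  by (simp add: Wf_ge indicator_def)

lemma Wf_step: fixes \<mu> :: "'s pmf" assumes "length l < n"
  shows "(\<integral>\<^sup>+x. Wf \<mu> n B (l @ [x]) \<partial>\<mu>) = Wf \<mu> n B l"
proof -
  obtain m where m: "n - length l = Suc m" using assms by (metis Suc_diff_Suc)
  have m2: "n - length (l @ [x]) = m" for x using m by simp
  have "Wf \<mu> n B l = emeasure (measure_pmf (bind_pmf \<mu> (\<lambda>x. bind_pmf (replicate_pmf m \<mu>) (\<lambda>xs. return_pmf (x#xs)))))
           {xs. take n (l @ xs) \<in> B}"
    unfolding Wf_def m by simp
  also have "\<dots> = (\<integral>\<^sup>+x. \<integral>\<^sup>+xs. indicator {xs. take n (l @ xs) \<in> B} (x#xs) \<partial>replicate_pmf m \<mu> \<partial>\<mu>)"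
    by simp
  also have "\<dots> = (\<integral>\<^sup>+x. Wf \<mu> n B (l @ [x]) \<partial>\<mu>)"
    unfolding Wf_def m2
    by (intro nn_integral_cong) (simp add: indicator_def flip: nn_integral_indicator[simplified])
  finally show ?thesis by simp
qed


lemma nn_integral_pmf_const: "(\<integral>\<^sup>+x. c \<partial>measure_pmf (p::'b pmf)) = c"
  by (simp add: measure_pmf.emeasure_space_1)

lemma traj_mart:
  fixes P :: "('s,'a) kernel"
  assumes key: "P hk sk ak = \<mu>"
  shows "(\<integral>\<^sup>+e. Wf \<mu> n B (l @ recv hk sk ak h e) \<partial>traj P pol k h s) = Wf \<mu> n B l"
proof (induction k arbitrary: h s l)
  case 0
  then show ?case by (simp add: nn_integral_pmf_const)
next
  case (Suc k)
  have "(\<integral>\<^sup>+e. Wf \<mu> n B (l @ recv hk sk ak h e) \<partial>traj P pol (Suc k) h s)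
     = (\<integral>\<^sup>+s'. (\<integral>\<^sup>+rest. Wf \<mu> n B ((l @ (if h = hk \<and> s = sk \<and> pol h s = ak then [s'] else []))
            @ recv hk sk ak (Suc h) rest) \<partial>traj P pol k (Suc h) s') \<partial>P h s (pol h s))"
    by simp
  also have "\<dots> = (\<integral>\<^sup>+s'. Wf \<mu> n B (l @ (if h = hk \<and> s = sk \<and> pol h s = ak then [s'] else [])) \<partial>P h s (pol h s))"
    by (simp only: Suc.IH)
  also have "\<dots> = Wf \<mu> n B l"
  proof (cases "h = hk \<and> s = sk \<and> pol h s = ak")
    case True
    then have PP: "P h s (pol h s) = \<mu>" using key by auto
    show ?thesis
    proof (cases "length l < n")
      case True
      then show ?thesis using PP Wf_step[OF True, of \<mu> B] by (simp only: if_P[OF \<open>h = hk \<and> s = sk \<and> pol h s = ak\<close>])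
    next
      case False
      then show ?thesis using \<open>h = hk \<and> s = sk \<and> pol h s = ak\<close>
        by (simp add: Wf_ge_app nn_integral_pmf_const)
    qed
  next
    case False
    then show ?thesis by (simp only: if_not_P[OF False] if_False append_Nil2 nn_integral_pmf_const)
  qed
  finally show ?case .
qed

lemma Lall_snoc: "Lall hk sk ak (hs @ [e]) = Lall hk sk ak hs @ recv hk sk ak 0 e"
  by (simp add: Lall_def)

lemma run_mart:
  assumes key: "Pstar hk sk ak = \<mu>"
  shows "(\<integral>\<^sup>+hs. Wf \<mu> n B (Lall hk sk ak hs) \<partial>run Pstar alg H sbar t) = Wf \<mu> n B []"
proof (induction t)
  case 0
  then show ?case by (simp add: Lall_def)
next
  case (Suc t)
  have "(\<integral>\<^sup>+hs. Wf \<mu> n B (Lall hk sk ak hs) \<partial>run Pstar alg H sbar (Suc t))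
      = (\<integral>\<^sup>+hs. (\<integral>\<^sup>+e. Wf \<mu> n B (Lall hk sk ak hs @ recv hk sk ak 0 e)
             \<partial>traj Pstar (fst (alg hs)) H 0 sbar) \<partial>run Pstar alg H sbar t)"
    by (simp add: Lall_snoc)
  also have "\<dots> = (\<integral>\<^sup>+hs. Wf \<mu> n B (Lall hk sk ak hs) \<partial>run Pstar alg H sbar t)"
    by (simp only: traj_mart[where P=Pstar and hk=hk and sk=sk and ak=ak, OF key])
  finally show ?case using Suc by simp
qed

lemma bad_bound:
  assumes key: "Pstar hk sk ak = \<mu>"
  shows "emeasure (run Pstar alg H sbar t) {hs. n \<le> length (Lall hk sk ak hs) \<and> take n (Lall hk sk ak hs) \<in> B}
      \<le> emeasure (replicate_pmf n \<mu>) {xs. take n xs \<in> B}"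
proof -
  have "emeasure (run Pstar alg H sbar t) {hs. n \<le> length (Lall hk sk ak hs) \<and> take n (Lall hk sk ak hs) \<in> B}
     = (\<integral>\<^sup>+hs. indicator {hs. n \<le> length (Lall hk sk ak hs) \<and> take n (Lall hk sk ak hs) \<in> B} hs \<partial>run Pstar alg H sbar t)"
    by simp
  also have "\<dots> \<le> (\<integral>\<^sup>+hs. Wf \<mu> n B (Lall hk sk ak hs) \<partial>run Pstar alg H sbar t)"
    by (intro nn_integral_mono) (auto simp: Wf_ge indicator_def)
  also have "\<dots> = Wf \<mu> n B []" by (rule run_mart[where Pstar=Pstar and hk=hk and sk=sk and ak=ak, OF key])
  also have "\<dots> = emeasure (replicate_pmf n \<mu>) {xs. take n xs \<in> B}"
    unfolding Wf_def by simp
  finally show ?thesis .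
qed


lemma sum_count_filter:
  assumes "finite D"
  shows "(\<Sum>s'\<in>D. length (filter (\<lambda>y. y = s') xs)) = length (filter (\<lambda>y. y \<in> D) xs)"
proof (induction xs)
  case Nil
  then show ?case by simp
next
  case (Cons x xs)
  have "(\<Sum>s'\<in>D. length (filter (\<lambda>y. y = s') (x # xs)))
      = (\<Sum>s'\<in>D. (if x = s' then 1 else 0) + length (filter (\<lambda>y. y = s') xs))"
    by (intro sum.cong) auto
  also have "\<dots> = (if x \<in> D then 1 else 0) + length (filter (\<lambda>y. y \<in> D) xs)"
    using assms Cons by (simp add: sum.distrib)
  finally show ?case by simp
qed

lemma map_replicate_pmf: "map_pmf (map f) (replicate_pmf n p) = replicate_pmf n (map_pmf f p)"
proof (induction n)
  case 0
  then show ?case by simp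
next
  case (Suc n)
  have "map_pmf (map f) (replicate_pmf (Suc n) p)
      = bind_pmf p (\<lambda>x. map_pmf (\<lambda>xs. f x # xs) (map_pmf (map f) (replicate_pmf n p)))"
    by (simp add: map_bind_pmf pmf.map_comp o_def map_pmf_def[symmetric])
  also have "\<dots> = bind_pmf (map_pmf f p) (\<lambda>y. map_pmf (\<lambda>xs. y # xs) (replicate_pmf n (map_pmf f p)))"
    by (simp add: Suc bind_map_pmf)
  also have "\<dots> = replicate_pmf (Suc n) (map_pmf f p)"
    by (simp add: map_pmf_def)
  finally show ?case .
qed

lemma map_pmf_bernoulli: "map_pmf (\<lambda>y. y \<in> D) p = bernoulli_pmf (measure_pmf.prob p D)"
proof (rule pmf_eqI)
  fix b :: bool
  show "pmf (map_pmf (\<lambda>y. y \<in> D) p) b = pmf (bernoulli_pmf (measure_pmf.prob p D)) b"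
  proof (cases b)
    case True
    then show ?thesis by (simp add: pmf_map vimage_def)
  next
    case False
    have e: "{x. x \<notin> D} = UNIV - D" by auto
    have "measure_pmf.prob p {x. x \<notin> D} = 1 - measure_pmf.prob p D"
      unfolding e using measure_pmf.prob_compl[of D p] by simp
    then show ?thesis using False by (simp add: pmf_map vimage_def)
  qed
qed

lemma count_binomial:
  "map_pmf (\<lambda>xs. length (filter (\<lambda>y. y \<in> D) xs)) (replicate_pmf n p) = binomial_pmf n (measure_pmf.prob p D)"
proof -
  have "map_pmf (\<lambda>xs. length (filter (\<lambda>y. y \<in> D) xs)) (replicate_pmf n p)
      = map_pmf (length \<circ> filter id) (map_pmf (map (\<lambda>y. y \<in> D)) (replicate_pmf n p))"
    by (simp add: pmf.map_comp o_def filter_map)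
  also have "\<dots> = binomial_pmf n (measure_pmf.prob p D)"
    by (simp add: map_replicate_pmf map_pmf_bernoulli binomial_pmf_altdef)
  finally show ?thesis .
qed

lemma subset_tail:
  assumes n: "n > 0" and e: "e \<ge> 0"
  shows "measure_pmf.prob (replicate_pmf n p)
           {xs. real (length (filter (\<lambda>y. y \<in> D) xs)) / n \<ge> measure_pmf.prob p D + e}
         \<le> exp (- 2 * n * e\<^sup>2)"
proof -
  interpret binomial_distribution n "measure_pmf.prob p D" by unfold_locales auto
  have "measure_pmf.prob (replicate_pmf n p)
           {xs. real (length (filter (\<lambda>y. y \<in> D) xs)) / n \<ge> measure_pmf.prob p D + e}
      = measure_pmf.prob (map_pmf (\<lambda>xs. length (filter (\<lambda>y. y \<in> D) xs)) (replicate_pmf n p))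
           {x. real x / n \<ge> measure_pmf.prob p D + e}"
    by simp
  also have "\<dots> \<le> exp (real_of_int (- 2 * int n) * e\<^sup>2)"
    unfolding count_binomial using prob_ge'[OF n e] by simp
  also have "\<dots> = exp (- 2 * real n * e\<^sup>2)" by simp
  finally show ?thesis .
qed


lemma l1_to_subset:
  fixes p q :: "'s::finite \<Rightarrow> real"
  assumes sp: "(\<Sum>s\<in>UNIV. p s) = 1" and sq: "(\<Sum>s\<in>UNIV. q s) = 1"
  shows "(\<Sum>s\<in>UNIV. \<bar>p s - q s\<bar>) = 2 * (\<Sum>s\<in>{s. p s < q s}. q s - p s)"
proof -
  let ?D = "{s. p s < q s}"
  have "(\<Sum>s\<in>UNIV. q s - p s) = 0" using sp sq by (simp add: sum_subtractf)
  moreover have "(\<Sum>s\<in>UNIV. q s - p s) = (\<Sum>s\<in>?D. q s - p s) + (\<Sum>s\<in>UNIV - ?D. q s - p s)"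
    by (simp add: sum.subset_diff[of ?D UNIV])
  moreover have "(\<Sum>s\<in>UNIV. \<bar>p s - q s\<bar>) = (\<Sum>s\<in>?D. \<bar>p s - q s\<bar>) + (\<Sum>s\<in>UNIV - ?D. \<bar>p s - q s\<bar>)"
    by (simp add: sum.subset_diff[of ?D UNIV])
  moreover have "(\<Sum>s\<in>?D. \<bar>p s - q s\<bar>) = (\<Sum>s\<in>?D. q s - p s)"
    by (intro sum.cong) auto
  moreover have "(\<Sum>s\<in>UNIV - ?D. \<bar>p s - q s\<bar>) = - (\<Sum>s\<in>UNIV - ?D. q s - p s)"
    by (subst sum_negf[symmetric], intro sum.cong) auto
  ultimately show ?thesis by linarith
qed

lemma weissman:
  fixes \<mu> :: "'s::finite pmf"
  assumes n: "n > 0" and eps: "\<epsilon> > 0"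
  shows "measure_pmf.prob (replicate_pmf n \<mu>)
           {xs. \<epsilon> < (\<Sum>s'\<in>UNIV. \<bar>pmf \<mu> s' - real (length (filter (\<lambda>y. y = s') xs)) / real n\<bar>)}
         \<le> real (2 ^ CARD('s) - 2) * exp (- real n * \<epsilon>\<^sup>2 / 2)"
proof -
  define F :: "'s set set" where "F = Pow UNIV - {{}, UNIV}"
  define E where "E D = {xs. real (length (filter (\<lambda>y. y \<in> D) xs)) / n \<ge> measure_pmf.prob \<mu> D + \<epsilon> / 2}" for D
  let ?S = "{xs. \<epsilon> < (\<Sum>s'\<in>UNIV. \<bar>pmf \<mu> s' - real (length (filter (\<lambda>y. y = s') xs)) / real n\<bar>)}"
  have sub: "?S \<inter> set_pmf (replicate_pmf n \<mu>) \<subseteq> (\<Union>D\<in>F. E D)"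
  proof
    fix xs assume xs: "xs \<in> ?S \<inter> set_pmf (replicate_pmf n \<mu>)"
    then have len: "length xs = n" by (simp add: set_replicate_pmf)
    define q where "q s' = real (length (filter (\<lambda>y. y = s') xs)) / real n" for s'
    define D where "D = {s. pmf \<mu> s < q s}"
    have sq: "(\<Sum>s\<in>UNIV. q s) = 1"
    proof -
      have "(\<Sum>s\<in>UNIV. q s) = real (\<Sum>s\<in>UNIV. length (filter (\<lambda>y. y = s) xs)) / real n"
        unfolding q_def by (simp add: sum_divide_distrib)
      also have "\<dots> = 1" using sum_count_filter[of UNIV xs] len n by simp
      finally show ?thesis .
    qed
    have sp: "(\<Sum>s\<in>UNIV. pmf \<mu> s) = 1" by (rule sum_pmf_eq_1) auto
    have l1: "(\<Sum>s\<in>UNIV. \<bar>pmf \<mu> s - q s\<bar>) = 2 * (\<Sum>s\<in>D. q s - pmf \<mu> s)"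
      unfolding D_def by (rule l1_to_subset[OF sp sq])
    have gt: "\<epsilon> / 2 < (\<Sum>s\<in>D. q s - pmf \<mu> s)"
      using xs l1 unfolding q_def by auto
    have qD: "(\<Sum>s\<in>D. q s) = real (length (filter (\<lambda>y. y \<in> D) xs)) / n"
    proof -
      have "(\<Sum>s\<in>D. q s) = real (\<Sum>s\<in>D. length (filter (\<lambda>y. y = s) xs)) / real n"
        unfolding q_def by (simp add: sum_divide_distrib)
      then show ?thesis using sum_count_filter[of D xs] by simp
    qed
    have pD: "(\<Sum>s\<in>D. pmf \<mu> s) = measure_pmf.prob \<mu> D"
      by (simp add: measure_measure_pmf_finite)
    have gt2: "\<epsilon> / 2 < (\<Sum>s\<in>D. q s) - (\<Sum>s\<in>D. pmf \<mu> s)" using gt by (simp add: sum_subtractf)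
    have "xs \<in> E D" unfolding E_def mem_Collect_eq using gt2 qD pD by linarith
    moreover have "D \<noteq> {}" using gt eps by auto
    moreover have "D \<noteq> UNIV"
    proof
      assume "D = UNIV"
      then have "(\<Sum>s\<in>D. q s - pmf \<mu> s) = 0" using sp sq by (simp add: sum_subtractf)
      then show False using gt eps by simp
    qed
    ultimately show "xs \<in> (\<Union>D\<in>F. E D)" unfolding F_def by auto
  qed
  have "measure_pmf.prob (replicate_pmf n \<mu>) ?S
      = measure_pmf.prob (replicate_pmf n \<mu>) (?S \<inter> set_pmf (replicate_pmf n \<mu>))"
    by (simp add: measure_Int_set_pmf)
  also have "\<dots> \<le> measure_pmf.prob (replicate_pmf n \<mu>) (\<Union>D\<in>F. E D)"
    by (rule measure_pmf.finite_measure_mono[OF sub]) simp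
  also have "\<dots> \<le> (\<Sum>D\<in>F. measure_pmf.prob (replicate_pmf n \<mu>) (E D))"
    by (rule measure_pmf.finite_measure_subadditive_finite) (auto simp: F_def)
  also have "\<dots> \<le> (\<Sum>D\<in>F. exp (- 2 * real n * (\<epsilon>/2)\<^sup>2))"
    unfolding E_def by (intro sum_mono subset_tail n) (use eps in simp)
  also have "\<dots> = real (card F) * exp (- real n * \<epsilon>\<^sup>2 / 2)"
    by (simp add: power_divide)
  also have "card F = 2 ^ CARD('s) - 2"
  proof -
    have "card F = card (Pow (UNIV::'s set)) - card {{}, UNIV::'s set}"
      unfolding F_def by (rule card_Diff_subset) auto
    moreover have "card {{}, UNIV::'s set} = 2" by simp
    ultimately show ?thesis by (simp add: card_Pow)
  qed
  finally show ?thesis .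
qed


lemma traj_len: "e \<in> set_pmf (traj P pol k h s) \<Longrightarrow> length e = k"
  by (induction k arbitrary: h s e) auto

lemma run_len: "hs \<in> set_pmf (run Pstar alg H sbar t) \<Longrightarrow> length hs = t \<and> (\<forall>e\<in>set hs. length e = H)"
  by (induction t arbitrary: hs) (auto dest: traj_len)

lemma run_take: "hs \<in> set_pmf (run Pstar alg H sbar T) \<Longrightarrow> t \<le> T \<Longrightarrow> take t hs \<in> set_pmf (run Pstar alg H sbar t)"
proof (induction T arbitrary: hs)
  case 0
  then show ?case by simp
next
  case (Suc T)
  then obtain hs' e where hs: "hs = hs' @ [e]" and hs': "hs' \<in> set_pmf (run Pstar alg H sbar T)"
    and e: "e \<in> set_pmf (traj Pstar (fst (alg hs')) H 0 sbar)" by auto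
  have lhs': "length hs' = T" using run_len[OF hs'] by simp
  show ?case
  proof (cases "t \<le> T")
    case True
    then have "take t hs = take t hs'" using hs lhs' by simp
    then show ?thesis using Suc.IH[OF hs' True] by simp
  next
    case False
    then have "t = Suc T" using Suc by simp
    then have "take t hs = hs" using hs lhs' by simp
    then show ?thesis using Suc.prems(1) \<open>t = Suc T\<close> by simp
  qed
qed

lemma recv_lt: "hk < h \<Longrightarrow> recv hk sk ak h e = []"
  by (induction hk sk ak h e rule: recv.induct) auto

lemma recv_char: "h \<le> hk \<Longrightarrow> hk < h + length e \<Longrightarrow>
   recv hk sk ak h e = (if fst (e ! (hk - h)) = sk \<and> fst (snd (e ! (hk - h))) = ak
                        then [snd (snd (e ! (hk - h)))] else [])"
proof (induction hk sk ak h e rule: recv.induct)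
  case (1 hk sk ak h)
  then show ?case by simp
next
  case (2 hk sk ak h s a s' rest)
  show ?case
  proof (cases "h = hk")
    case True
    then show ?thesis by (auto simp: recv_lt)
  next
    case False
    then have "Suc h \<le> hk" "hk < Suc h + length rest" using 2 by auto
    moreover have "hk - h = Suc (hk - Suc h)" using \<open>Suc h \<le> hk\<close> by simp
    ultimately show ?thesis using 2 False by simp
  qed
qed

lemma recv_len: "length (recv hk sk ak h e) \<le> 1"
  by (induction hk sk ak h e rule: recv.induct) (auto simp: recv_lt)

lemma Lall_len: "length (Lall hk sk ak hs) \<le> length hs"
proof (induction hs)
  case Nil
  then show ?case by (simp add: Lall_def)
next
  case (Cons e hs)
  then show ?case using recv_len[of hk sk ak 0 e] by (simp add: Lall_def)
qed

lemma Lall_append: "Lall hk sk ak (xs @ ys) = Lall hk sk ak xs @ Lall hk sk ak ys"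
  by (simp add: Lall_def)

lemma recv0: "length e = H \<Longrightarrow> hk < H \<Longrightarrow> recv hk sk ak 0 e = (if fst (e ! hk) = sk \<and> fst (snd (e ! hk)) = ak
                        then [snd (snd (e ! hk))] else [])"
  using recv_char[of 0 hk e sk ak] by simp

lemma Ncount_Lall:
  assumes "\<forall>e\<in>set hs. length e = H" "hk < H"
  shows "Ncount hs hk sk ak = length (Lall hk sk ak hs)"
  using assms
  by (induction hs) (auto simp: Ncount_def Lall_def recv0)

lemma Ncount3_Lall:
  assumes "\<forall>e\<in>set hs. length e = H" "hk < H"
  shows "Ncount3 hs hk sk ak s' = length (filter (\<lambda>y. y = s') (Lall hk sk ak hs))"
  using assms
proof (induction hs)
  case Nil
  then show ?case by (simp add: Ncount3_def Lall_def)
next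
  case (Cons e hs)
  have r: "recv hk sk ak 0 e = (if fst (e ! hk) = sk \<and> fst (snd (e ! hk)) = ak
                        then [snd (snd (e ! hk))] else [])"
    using recv0[of e H hk sk ak] Cons.prems by simp
  have "(e ! hk = (sk, ak, s')) = (fst (e ! hk) = sk \<and> fst (snd (e ! hk)) = ak \<and> snd (snd (e ! hk)) = s')"
    by (cases "e ! hk") auto
  then show ?case using Cons r by (auto simp: Ncount3_def Lall_def)
qed


lemma per_index_bound:
  fixes Pstar :: "('s::finite,'a) kernel"
  assumes n: "n > 0" and rad: "rad > 0"
    and K: "real (2 ^ CARD('s) - 2) * exp (- real n * rad\<^sup>2 / 2) \<le> \<beta>"
  shows "measure_pmf.prob (run Pstar alg H sbar t)
     {hs. n \<le> length (Lall hk sk ak hs) \<and> take n (Lall hk sk ak hs) \<in>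
        {xs. rad < (\<Sum>s'\<in>UNIV. \<bar>pmf (Pstar hk sk ak) s' - real (length (filter (\<lambda>y. y = s') xs)) / real n\<bar>)}}
     \<le> \<beta>"
proof -
  let ?B = "{xs. rad < (\<Sum>s'\<in>UNIV. \<bar>pmf (Pstar hk sk ak) s' - real (length (filter (\<lambda>y. y = s') xs)) / real n\<bar>)}"
  let ?R = "replicate_pmf n (Pstar hk sk ak)"
  have em: "emeasure (run Pstar alg H sbar t) {hs. n \<le> length (Lall hk sk ak hs) \<and> take n (Lall hk sk ak hs) \<in> ?B}
      \<le> emeasure ?R {xs. take n xs \<in> ?B}"
    by (rule bad_bound) simp
  have seq: "{xs. take n xs \<in> ?B} \<inter> set_pmf ?R = ?B \<inter> set_pmf ?R"
    by (auto simp: set_replicate_pmf)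
  have "measure_pmf.prob ?R {xs. take n xs \<in> ?B} = measure_pmf.prob ?R ({xs. take n xs \<in> ?B} \<inter> set_pmf ?R)"
    by (simp only: measure_Int_set_pmf)
  also have "\<dots> = measure_pmf.prob ?R ?B"
    by (simp only: seq measure_Int_set_pmf)
  finally have m2: "measure_pmf.prob ?R {xs. take n xs \<in> ?B} = measure_pmf.prob ?R ?B" .
  have "measure_pmf.prob (run Pstar alg H sbar t) {hs. n \<le> length (Lall hk sk ak hs) \<and> take n (Lall hk sk ak hs) \<in> ?B}
      \<le> measure_pmf.prob ?R {xs. take n xs \<in> ?B}"
    using em by (simp only: measure_pmf.emeasure_eq_measure ennreal_le_iff measure_nonneg)
  also have "\<dots> = measure_pmf.prob ?R ?B" by (rule m2)
  also have "\<dots> \<le> real (2 ^ CARD('s) - 2) * exp (- real n * rad\<^sup>2 / 2)"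
    by (rule weissman[OF n rad])
  finally show ?thesis using K by linarith
qed


lemma num_bound:
  fixes S A T H n :: nat and \<delta> c :: real
  assumes S: "S \<ge> 1" and A: "A \<ge> 1" and T: "T \<ge> 1" and H: "H \<ge> 1" and d: "0 < \<delta>" "\<delta> < 1"
    and cb: "c \<ge> max 2 (sqrt (2 * ln (real S * real A * real T * real H * (2 ^ S - 2) / \<delta>)))
                     / sqrt (ln (2 * real S * real A * real T * real H / \<delta>))"
  shows "c * sqrt (ln (2 * real S * real A * real T * real H / \<delta>) / real (max 1 0)) \<ge> 2"
    and "n \<ge> 1 \<Longrightarrow> c * sqrt (ln (2 * real S * real A * real T * real H / \<delta>) / real (max 1 n)) > 0"
    and "n \<ge> 1 \<Longrightarrow> ((2::real) ^ S - 2) * exp (- real n * (c * sqrt (ln (2 * real S * real A * real T * real H / \<delta>) / real (max 1 n)))\<^sup>2 / 2)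
            \<le> \<delta> / (real S * real A * real T * real H)"
proof -
  define M where "M = real S * real A * real T * real H"
  have "S * A * T * H > 0" using S A T H by simp
  hence "real (S * A * T * H) \<ge> 1" by linarith
  hence M1: "M \<ge> 1" unfolding M_def by simp
  define L where "L = ln (2 * M / \<delta>)"
  have "2 * M / \<delta> > 1" using M1 d by (simp add: field_simps)
  hence Lpos: "L > 0" unfolding L_def by simp
  have LL: "ln (2 * real S * real A * real T * real H / \<delta>) = L" unfolding L_def M_def by (simp add: mult.assoc)
  define sL where "sL = sqrt L"
  have sLpos: "sL > 0" using Lpos unfolding sL_def by simp
  define X where "X = M * (2 ^ S - 2) / \<delta>"
  have cb': "c \<ge> max 2 (sqrt (2 * ln X)) / sL"
    using cb unfolding X_def sL_def LL[symmetric] M_def by (simp add: mult.assoc)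
  have "2 / sL \<le> max 2 (sqrt (2 * ln X)) / sL" using sLpos by (simp add: divide_right_mono)
  hence c2: "c * sL \<ge> 2" using cb' sLpos by (simp add: field_simps)
  have cpos: "c > 0" using c2 sLpos by (smt (verit) mult_nonpos_nonneg)
  show "c * sqrt (ln (2 * real S * real A * real T * real H / \<delta>) / real (max 1 0)) \<ge> 2"
    using c2 unfolding LL sL_def by simp
  assume n: "n \<ge> 1"
  have mx: "real (max 1 n) = real n" using n by simp
  have npos: "real n > 0" using n by simp
  define rad where "rad = c * sqrt (L / real n)"
  have rad_eq: "rad = c * sL / sqrt (real n)" unfolding rad_def sL_def by (simp add: real_sqrt_divide)
  show "c * sqrt (ln (2 * real S * real A * real T * real H / \<delta>) / real (max 1 n)) > 0"
    unfolding LL mx using cpos Lpos npos by simp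
  have rad2: "real n * rad\<^sup>2 / 2 = (c * sL)\<^sup>2 / 2"
    unfolding rad_eq using npos by (simp add: power_divide power_mult_distrib)
  show "((2::real) ^ S - 2) * exp (- real n * (c * sqrt (ln (2 * real S * real A * real T * real H / \<delta>) / real (max 1 n)))\<^sup>2 / 2)
            \<le> \<delta> / (real S * real A * real T * real H)"
  proof (cases "S = 1")
    case True
    then show ?thesis using d M1 unfolding M_def by simp
  next
    case False
    hence S2: "S \<ge> 2" using S by simp
    have "(2::real) ^ S \<ge> 2 ^ 2" using S2 by (intro power_increasing) auto
    hence K: "(2::real) ^ S - 2 \<ge> 2" by simp
    have Xpos: "X \<ge> 1"
    proof -
      have "M * (2 ^ S - 2) \<ge> 1 * 2" using M1 K by (intro mult_mono) auto
      then show ?thesis using d by (simp add: X_def field_simps)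
    qed
    have lnX: "ln X \<ge> 0" using Xpos by simp
    have "sqrt (2 * ln X) / sL \<le> c" using cb' sLpos by (smt (verit) divide_right_mono max.cobounded2)
    hence "sqrt (2 * ln X) \<le> c * sL" using sLpos by (simp add: field_simps)
    hence "(sqrt (2 * ln X))\<^sup>2 \<le> (c * sL)\<^sup>2" using lnX by (intro power_mono) auto
    hence "2 * ln X \<le> (c * sL)\<^sup>2" using lnX by simp
    hence ge: "real n * rad\<^sup>2 / 2 \<ge> ln X" using rad2 by simp
    have "exp (- (real n * rad\<^sup>2 / 2)) \<le> exp (- ln X)" using ge by simp
    also have "\<dots> = 1 / X" using Xpos by (simp add: exp_minus inverse_eq_divide)
    finally have e: "exp (- real n * rad\<^sup>2 / 2) \<le> 1 / X" by simp
    have "((2::real) ^ S - 2) * exp (- real n * rad\<^sup>2 / 2) \<le> ((2::real) ^ S - 2) * (1 / X)"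
      using e K by (intro mult_left_mono) auto
    also have "\<dots> = \<delta> / M" unfolding X_def using K d M1 by (simp add: field_simps)
    finally show ?thesis unfolding LL mx M_def rad_def[symmetric] .
  qed
qed


theorem mainTheorem2:
  fixes Pstar :: "nat \<Rightarrow> 's::finite \<Rightarrow> 'a::finite \<Rightarrow> 's pmf"
    and r :: "nat \<Rightarrow> 's \<Rightarrow> 'a \<Rightarrow> real"
    and H T :: nat and \<delta> \<tau> \<kappa> c :: real and sbar :: 's
    and pistar :: "nat \<Rightarrow> 's \<Rightarrow> 'a"
    and alg :: "('s \<times> 'a \<times> 's) list list \<Rightarrow> (nat \<Rightarrow> 's \<Rightarrow> 'a) \<times> (nat \<Rightarrow> 's \<Rightarrow> 'a \<Rightarrow> 's pmf)"
  assumes H_pos: "0 < H"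
    and delta: "0 < \<delta>" "\<delta> < 1"
    and tau: "0 < \<tau>" "\<tau> < 1"
    and kappa: "0 < \<kappa>" "\<kappa> \<le> 1"
    and rew: "\<And>h s a. h < H \<Longrightarrow> 0 \<le> r h s a \<and> r h s a \<le> 1"
    and margin: "quantile_margin Pstar r H \<kappa>"
    and c_bound: "c \<ge> max 2 (sqrt (2 * ln (real CARD('s) * real CARD('a) * real T * real H
                        * (2 ^ CARD('s) - 2) / \<delta>)))
                     / sqrt (ln (2 * real CARD('s) * real CARD('a) * real T * real H / \<delta>))"
    and pistar_opt: "\<And>pol s. Vq Pstar r H pol \<tau> 0 s \<le> Vq Pstar r H pistar \<tau> 0 s"
    and alg_max: "\<And>t hs. t < T \<Longrightarrow> hs \<in> set_pmf (run Pstar alg H sbar t) \<Longrightarrow>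
        snd (alg hs) \<in> conf_set_kappa r T H c \<delta> \<kappa> hs \<and>
        (\<forall>pol. \<forall>P \<in> conf_set_kappa r T H c \<delta> \<kappa> hs. \<forall>s.
            Vq P r H pol \<tau> 0 s \<le> Vq (snd (alg hs)) r H (fst (alg hs)) \<tau> 0 s)"
  shows "measure_pmf.prob (run Pstar alg H sbar T)
           {hs. \<forall>t<T. \<forall>s. Vq Pstar r H pistar \<tau> 0 s
                  \<le> Vq (snd (alg (take t hs))) r H (fst (alg (take t hs))) \<tau> 0 s}
         \<ge> 1 - \<delta>"
proof (cases "T = 0")
  case True
  then show ?thesis using delta by simp
next
  case False
  hence T1: "T \<ge> 1" by simp
  let ?S = "CARD('s)" and ?A = "CARD('a)"
  have S1: "?S \<ge> 1" and A1: "?A \<ge> 1" by (simp_all add: Suc_le_eq)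
  have H1: "H \<ge> 1" using H_pos by simp
  define rad where "rad n = conf_rad ?S ?A T H c \<delta> n" for n
  note nb = num_bound[OF S1 A1 T1 H1 delta c_bound]
  have r0: "rad 0 \<ge> 2" using nb(1) unfolding rad_def conf_rad_def .
  have rpos: "rad n > 0" if "n \<ge> 1" for n using nb(2)[OF that] unfolding rad_def conf_rad_def .
  have rK0: "((2::real) ^ ?S - 2) * exp (- real n * (rad n)\<^sup>2 / 2) \<le> \<delta> / (real ?S * real ?A * real T * real H)"
    if "n \<ge> 1" for n using nb(3)[OF that] unfolding rad_def conf_rad_def .
  have "(2::nat) ^ 1 \<le> 2 ^ ?S" using S1 by (intro power_increasing) auto
  hence realK: "real (2 ^ ?S - 2) = (2::real) ^ ?S - 2" by (simp add: of_nat_diff)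
  define \<beta> where "\<beta> = \<delta> / (real ?S * real ?A * real T * real H)"
  define Bd where "Bd = (\<lambda>(h, s, a, n). {hs. n \<le> length (Lall h s a hs) \<and> take n (Lall h s a hs) \<in>
        {xs. rad n < (\<Sum>s'\<in>UNIV. \<bar>pmf (Pstar h s a) s' - real (length (filter (\<lambda>y. y = s') xs)) / real n\<bar>)}})"
  define I where "I = {..<H} \<times> (UNIV::'s set) \<times> (UNIV::'a set) \<times> {1..<T}"
  define G where "G = {hs. \<forall>t<T. \<forall>s. Vq Pstar r H pistar \<tau> 0 s
                  \<le> Vq (snd (alg (take t hs))) r H (fst (alg (take t hs))) \<tau> 0 s}"
  have key: "hs \<in> (\<Union>i\<in>I. Bd i)" if hs: "hs \<in> set_pmf (run Pstar alg H sbar T)" and nG: "hs \<notin> G" for hs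
  proof -
    obtain t s0 where t: "t < T" and bad: "\<not> Vq Pstar r H pistar \<tau> 0 s0
                  \<le> Vq (snd (alg (take t hs))) r H (fst (alg (take t hs))) \<tau> 0 s0"
      using nG unfolding G_def by auto
    define ht where "ht = take t hs"
    have ht: "ht \<in> set_pmf (run Pstar alg H sbar t)" unfolding ht_def using run_take[OF hs] t by simp
    have notin: "Pstar \<notin> conf_set T H c \<delta> ht"
    proof
      assume "Pstar \<in> conf_set T H c \<delta> ht"
      hence "Pstar \<in> conf_set_kappa r T H c \<delta> \<kappa> ht" using margin unfolding conf_set_kappa_def by simp
      thus False using alg_max[OF t ht] bad unfolding ht_def by blast
    qed
    then obtain h s a where h: "h < H" and gt: "conf_rad ?S ?A T H c \<delta> (Ncount ht h s a)
         < (\<Sum>s'\<in>UNIV. \<bar>pmf (Pstar h s a) s' - Phat ht h s a s'\<bar>)"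
      unfolding conf_set_def by (auto simp: not_le)
    have lens: "\<forall>e\<in>set ht. length e = H" using run_len[OF ht] by simp
    define n where "n = length (Lall h s a ht)"
    have Nc: "Ncount ht h s a = n" unfolding n_def by (rule Ncount_Lall[OF lens h])
    have Ph: "Phat ht h s a s' = real (length (filter (\<lambda>y. y = s') (Lall h s a ht))) / real (max 1 n)" for s'
      unfolding Phat_def Nc Ncount3_Lall[OF lens h] ..
    have n0: "n \<noteq> 0"
    proof
      assume "n = 0"
      hence "Lall h s a ht = []" unfolding n_def by simp
      hence "Phat ht h s a s' = 0" for s' using Ph by simp
      hence "(\<Sum>s'\<in>UNIV. \<bar>pmf (Pstar h s a) s' - Phat ht h s a s'\<bar>) = (\<Sum>s'\<in>UNIV. pmf (Pstar h s a) s')" by simp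
      also have "\<dots> = 1" by (rule sum_pmf_eq_1) auto
      finally show False using gt r0 \<open>n = 0\<close> Nc unfolding rad_def by simp
    qed
    have nt: "n \<le> t" unfolding n_def using Lall_len[of h s a ht] unfolding ht_def by simp
    have LL: "Lall h s a hs = Lall h s a ht @ Lall h s a (drop t hs)"
      unfolding ht_def Lall_append[symmetric] by simp
    have mx: "real (max 1 n) = real n" using n0 by simp
    have "hs \<in> Bd (h, s, a, n)"
      unfolding Bd_def using gt LL n0 unfolding Nc Ph mx rad_def by (simp add: n_def)
    moreover have "(h, s, a, n) \<in> I" unfolding I_def using h n0 nt t by simp
    ultimately show ?thesis by blast
  qed
  let ?M = "run Pstar alg H sbar T"
  have "measure_pmf.prob ?M (UNIV - G) = measure_pmf.prob ?M ((UNIV - G) \<inter> set_pmf ?M)"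
    by (simp only: measure_Int_set_pmf)
  also have "\<dots> \<le> measure_pmf.prob ?M (\<Union>i\<in>I. Bd i)"
    by (rule measure_pmf.finite_measure_mono) (use key in auto)
  also have "\<dots> \<le> (\<Sum>i\<in>I. measure_pmf.prob ?M (Bd i))"
    by (rule measure_pmf.finite_measure_subadditive_finite) (auto simp: I_def)
  also have "\<dots> \<le> (\<Sum>i\<in>I. \<beta>)"
  proof (rule sum_mono)
    fix i assume "i \<in> I"
    then obtain h s a n where i: "i = (h, s, a, n)" and n: "n \<ge> 1" unfolding I_def by auto
    show "measure_pmf.prob ?M (Bd i) \<le> \<beta>"
      unfolding i Bd_def split
      by (rule per_index_bound) (use n rpos rK0 realK in \<open>auto simp: \<beta>_def\<close>)
  qed
  also have "\<dots> = real (H * ?S * ?A * (T - 1)) * \<beta>"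
    by (simp add: I_def card_cartesian_product)
  also have "\<dots> \<le> \<delta>"
  proof -
    have "H * ?S * ?A * (T - 1) \<le> H * ?S * ?A * T" by (intro mult_le_mono2) simp
    also have "\<dots> = ?S * ?A * T * H" by (simp add: ac_simps)
    finally have "real (H * ?S * ?A * (T - 1)) \<le> real (?S * ?A * T * H)" by (simp only: of_nat_le_iff)
    moreover have "real (?S * ?A * T * H) * \<beta> = \<delta>"
      unfolding \<beta>_def using S1 A1 T1 H1 by simp
    moreover have "\<beta> \<ge> 0" unfolding \<beta>_def using delta by simp
    ultimately show ?thesis by (metis mult_right_mono)
  qed
  finally have "measure_pmf.prob ?M (UNIV - G) \<le> \<delta>" .
  moreover have "measure_pmf.prob ?M (UNIV - G) = 1 - measure_pmf.prob ?M G"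
    using measure_pmf.prob_compl[of G ?M] by simp
  ultimately show ?thesis unfolding G_def by simp
qed

end
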